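(* There exist knots $K$ such that: $\det(K)$ has no divisor congruent to $3\bmod 4$; the Alexander polynomial has the form $\Delta_K(t)=f(t)f(1/t)$ for some $f\in\mathbb{Z}[t]$; all Tristram–Levine signatures of $K$ vanish; $|\Lambda_0(K)|>\sqrt{\det(K)}$; and the linking form of $K$ has no metabolizer.
   Context: For a knot $K\subset S^3$, $D_K$ is the double branched cover of $S^3$ over $K$; $H_1(D_K;\mathbb{Z})$ is finite of odd order $\det(K)=|\Delta_K(-1)|$. The linking form $\lambda:H_1(D_K)\times H_1(D_K)\to\mathbb{Q}/\mathbb{Z}$ is the standard symmetric non-degenerate linking pairing. The isotropic cone is $\Lambda_0(K)=\{g\in H_1(D_K):\lambda(g,g)=0\}$. A metabolizer is a subgroup $M\subset H_1(D_K)$ of order $\sqrt{\det(K)}$ with $M=M^\perp=\{g:\lambda(g,h)=0\ \forall h\in M\}$. For a Seifert matrix $V$ of $K$ and $\xi\in\mathbb{C}$ with $|\xi|=1$, the Tristram–Levine signature $\sigma_\xi(K)$ is the signature of the Hermitian matrix $(1-\xi)V+(1-\bar\xi)V^T$. *)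

theory Defs
  imports "Jordan_Normal_Form.Char_Poly" "HOL-Algebra.Group" "HOL-Computational_Algebra.Polynomial"
begin

text \<open>Knots are modelled by their Seifert matrices: an integer square matrix V with
  det(V - V^T) = 1.  (Every such matrix is the Seifert matrix of some knot in S^3.)\<close>

definition seifert_matrix :: "int mat \<Rightarrow> bool" where
  "seifert_matrix V \<longleftrightarrow> V \<in> carrier_mat (dim_row V) (dim_row V) \<and>
     det (V - transpose_mat V) = 1"

text \<open>Symmetrised matrix V + V^T: presentation matrix of H_1(D_K).\<close>
definition sym_mat :: "int mat \<Rightarrow> int mat" where
  "sym_mat V = V + transpose_mat V"

text \<open>det(K) = |Delta_K(-1)| = |det(V + V^T)|.\<close>
definition knot_det :: "int mat \<Rightarrow> nat" where
  "knot_det V = nat \<bar>det (sym_mat V)\<bar>"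

text \<open>Alexander polynomial Delta_K(t) = det(V - t V^T), well defined up to units +-t^k.\<close>
definition alexander_poly :: "int mat \<Rightarrow> int poly" where
  "alexander_poly V = det (map_mat (\<lambda>a. [:a:]) V - map_mat (\<lambda>a. [:0, a:]) (transpose_mat V))"

text \<open>Delta_K(t) = f(t) f(1/t) up to units: monom e a * Delta = monom 1 b * f * reflect_poly f,
  where reflect_poly f (t) = t^(deg f) f(1/t).\<close>
definition alexander_is_norm :: "int mat \<Rightarrow> bool" where
  "alexander_is_norm V \<longleftrightarrow> (\<exists>f :: int poly. \<exists>e :: int. \<exists>a b :: nat. e \<in> {1, -1} \<and>
     monom e a * alexander_poly V = monom 1 b * f * reflect_poly f)"

definition signature :: "complex mat \<Rightarrow> int" where
  "signature B =
     int (\<Sum>x\<in>{x::real. x > 0 \<and> poly (char_poly B) (complex_of_real x) = 0}.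
            order (complex_of_real x) (char_poly B))
   - int (\<Sum>x\<in>{x::real. x < 0 \<and> poly (char_poly B) (complex_of_real x) = 0}.
            order (complex_of_real x) (char_poly B))"

definition tl_signature :: "int mat \<Rightarrow> complex \<Rightarrow> int" where
  "tl_signature V \<xi> = signature
     ((1 - \<xi>) \<cdot>\<^sub>m map_mat of_int V + (1 - cnj \<xi>) \<cdot>\<^sub>m map_mat of_int (transpose_mat V))"

text \<open>H_1(D_K) = Z^n / (V + V^T) Z^n, as a group of cosets.\<close>
definition hrel :: "int mat \<Rightarrow> (int vec \<times> int vec) set" where
  "hrel V = {(x, y). x \<in> carrier_vec (dim_row V) \<and> y \<in> carrier_vec (dim_row V) \<and>
     (\<exists>z \<in> carrier_vec (dim_row V). x - y = sym_mat V *\<^sub>v z)}"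

definition H1 :: "int mat \<Rightarrow> int vec set monoid" where
  "H1 V = \<lparr> carrier = carrier_vec (dim_row V) // hrel V,
            mult = (\<lambda>X Y. {x + y | x y. x \<in> X \<and> y \<in> Y}),
            one = hrel V `` {0\<^sub>v (dim_row V)} \<rparr>"

text \<open>Linking form lambda([x],[y]) = x^T (V+V^T)^{-1} y mod Z, with the inverse written as
  adj / det, valued in [0,1) (representing Q/Z).\<close>
definition lk_rep :: "int mat \<Rightarrow> int vec \<Rightarrow> int vec \<Rightarrow> rat" where
  "lk_rep V x y = frac (of_int (scalar_prod x (adj_mat (sym_mat V) *\<^sub>v y)) / of_int (det (sym_mat V)))"

definition linking_form :: "int mat \<Rightarrow> int vec set \<Rightarrow> int vec set \<Rightarrow> rat" where
  "linking_form V X Y = lk_rep V (SOME x. x \<in> X) (SOME y. y \<in> Y)"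

definition isotropic_cone :: "int mat \<Rightarrow> int vec set set" where
  "isotropic_cone V = {g \<in> carrier (H1 V). linking_form V g g = 0}"

definition metabolizer :: "int mat \<Rightarrow> int vec set set \<Rightarrow> bool" where
  "metabolizer V M \<longleftrightarrow> subgroup M (H1 V) \<and> real (card M) = sqrt (real (knot_det V)) \<and>
     M = {g \<in> carrier (H1 V). \<forall>h \<in> M. linking_form V g h = 0}"

end

theory Submission
  imports Defs "HOL-Number_Theory.Cong"
begin


definition F4 :: "int \<Rightarrow> int \<Rightarrow> int \<Rightarrow> int \<Rightarrow> int" where
  "F4 a b c d = a^2 + b^2 + c^2 + 2*d^2"

lemma dvd_comb: fixes p :: int
  shows "p dvd A \<Longrightarrow> p dvd B \<Longrightarrow> X = A * s + B * t \<Longrightarrow> p dvd X"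
  by simp

lemma F4_comb:
  "F4 (a*v1+b*w1) (a*v2+b*w2) (a*v3+b*w3) (a*v4+b*w4) =
   a^2 * F4 v1 v2 v3 v4 + b^2 * F4 w1 w2 w3 w4 +
   (a*b) * (F4 (v1+w1) (v2+w2) (v3+w3) (v4+w4) - F4 v1 v2 v3 v4 - F4 w1 w2 w3 w4)"
  unfolding F4_def power2_eq_square by (simp add: algebra_simps)

lemma iso_y0:
  fixes p k x1 x2 x3 x4 :: int
  assumes aniso: "\<And>a b. p dvd a^2 + 2*b^2 \<Longrightarrow> p dvd a \<and> p dvd b"
    and k: "p dvd k^2 + 1"
    and F: "p dvd F4 x1 x2 x3 x4" and y: "p dvd x1 + k * x2"
  shows "p dvd x3 \<and> p dvd x4"
proof -
  have e: "F4 x1 x2 x3 x4 = (x1 + k*x2) * (x1 - k*x2) + (k^2+1) * x2^2 + (x3^2 + 2*x4^2)"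
    unfolding F4_def power2_eq_square by (simp add: algebra_simps)
  have "p dvd x3^2 + 2*x4^2"
  proof -
    have "x3^2 + 2*x4^2 = F4 x1 x2 x3 x4 - (x1 + k*x2) * (x1 - k*x2) - (k^2+1) * x2^2"
      using e by simp
    moreover have "p dvd F4 x1 x2 x3 x4 - (x1 + k*x2) * (x1 - k*x2) - (k^2+1) * x2^2"
      using F y k by (intro dvd_diff) auto
    ultimately show ?thesis by simp
  qed
  then show ?thesis using aniso by blast
qed

lemma inverse_ex:
  fixes p a :: int assumes "prime p" "\<not> p dvd a"
  shows "\<exists>i. p dvd i * a - 1"
proof -
  have "coprime a p" using assms
    by (metis coprime_commute prime_imp_coprime)
  then obtain i where "[a * i = 1] (mod p)" using cong_solve_coprime_int by blast
  then show ?thesis by (metis cong_iff_dvd_diff mult.commute cong_sym_eq)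
qed

lemma case_y:
  fixes p k :: int
  assumes pr: "prime p" and p2: "\<not> p dvd 2"
    and aniso: "\<And>a b. p dvd a^2 + 2*b^2 \<Longrightarrow> p dvd a \<and> p dvd b"
    and k: "p dvd k^2 + 1"
    and Fv: "p dvd F4 v1 v2 v3 v4" and Fw: "p dvd F4 w1 w2 w3 w4"
    and Fvw: "p dvd F4 (v1+w1) (v2+w2) (v3+w3) (v4+w4)"
    and nz: "\<not> (p dvd v1 \<and> p dvd v2 \<and> p dvd v3 \<and> p dvd v4)"
    and yv: "p dvd v1 + k * v2"
  shows "\<exists>c. p dvd w1 - c*v1 \<and> p dvd w2 - c*v2 \<and> p dvd w3 - c*v3 \<and> p dvd w4 - c*v4"
proof -
  have v34: "p dvd v3 \<and> p dvd v4" using iso_y0[OF aniso k Fv yv] by blast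
  define B where "B = v1*w1 + v2*w2 + v3*w3 + 2*v4*w4"
  have "2 * B = F4 (v1+w1) (v2+w2) (v3+w3) (v4+w4) - F4 v1 v2 v3 v4 - F4 w1 w2 w3 w4"
    unfolding B_def F4_def power2_eq_square by (simp add: algebra_simps)
  then have "p dvd 2 * B" using Fv Fw Fvw by simp
  then have pB: "p dvd B" using pr p2 prime_dvd_mult_iff by blast
  have eB: "k * v2 * (w1 + k*w2) = w1 * (v1 + k*v2) + (k^2+1) * (v2*w2) + v3*w3 + 2*v4*w4 - B"
    unfolding B_def power2_eq_square by (simp add: algebra_simps)
  have "p dvd k * v2 * (w1 + k*w2)"
    unfolding eB using yv k v34 pB
    by (intro dvd_diff dvd_add) auto
  moreover have "\<not> p dvd k"
  proof
    assume "p dvd k" then have "p dvd k^2" by (simp add: power2_eq_square)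
    then have "p dvd 1" using k by (metis dvd_add_right_iff)
    then show False using pr by (simp add: prime_int_iff)
  qed
  moreover have nv2: "\<not> p dvd v2"
  proof
    assume "p dvd v2"
    then have "p dvd v1" using yv by (metis dvd_add_left_iff dvd_mult)
    then show False using nz v34 \<open>p dvd v2\<close> by blast
  qed
  ultimately have yw: "p dvd w1 + k*w2" using pr by (simp add: prime_dvd_mult_iff)
  have w34: "p dvd w3 \<and> p dvd w4" using iso_y0[OF aniso k Fw yw] by blast
  obtain i where i: "p dvd i * v2 - 1" using inverse_ex[OF pr nv2] by blast
  define c where "c = w2 * i"
  have h2: "p dvd w2 - c*v2"
  proof -
    have "w2 - c*v2 = - (w2 * (i*v2 - 1))" unfolding c_def by (simp add: algebra_simps power2_eq_square)
    then show ?thesis using i by simp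
  qed
  have h1: "p dvd w1 - c*v1"
  proof -
    have e: "w1 - c*v1 = (w1 + k*w2) - c*(v1 + k*v2) - k*(w2 - c*v2)" by (simp add: algebra_simps)
    show ?thesis by (subst e) (intro dvd_diff dvd_mult yw yv h2)
  qed
  show ?thesis using h1 h2 w34 v34 by (intro exI[of _ c]) auto
qed

lemma comb_dvd:
  fixes p :: int
  assumes "p dvd F4 v1 v2 v3 v4" "p dvd F4 w1 w2 w3 w4"
    "p dvd F4 (v1+w1) (v2+w2) (v3+w3) (v4+w4)"
  shows "p dvd F4 (a*v1+b*w1) (a*v2+b*w2) (a*v3+b*w3) (a*v4+b*w4)"
  unfolding F4_comb using assms by (intro dvd_add dvd_mult dvd_diff) auto

lemma solve1:
  fixes p :: int
  assumes "p dvd i*t - 1" "p dvd a*v + b*w" "b = - t"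
  shows "p dvd w - (i*a)*v"
proof -
  have e: "w - (i*a)*v = - (w * (i*t - 1)) - i * (a*v + b*w)" using assms(3) by (simp add: algebra_simps)
  show ?thesis by (subst e) (intro dvd_diff dvd_mult assms dvd_minus_iff[THEN iffD2])
qed

lemma core:
  fixes p k :: int
  assumes pr: "prime p" and p2: "\<not> p dvd 2"
    and aniso: "\<And>a b. p dvd a^2 + 2*b^2 \<Longrightarrow> p dvd a \<and> p dvd b"
    and k: "p dvd k^2 + 1"
    and Fv: "p dvd F4 v1 v2 v3 v4" and Fw: "p dvd F4 w1 w2 w3 w4"
    and Fvw: "p dvd F4 (v1+w1) (v2+w2) (v3+w3) (v4+w4)"
    and nz: "\<not> (p dvd v1 \<and> p dvd v2 \<and> p dvd v3 \<and> p dvd v4)"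
  shows "\<exists>c. p dvd w1 - c*v1 \<and> p dvd w2 - c*v2 \<and> p dvd w3 - c*v3 \<and> p dvd w4 - c*v4"
proof -
  have k': "p dvd (-k)^2 + 1" using k by simp
  consider (Y) "p dvd v1 + k * v2" | (Z) "p dvd v1 + (-k) * v2"
    | (N) "\<not> p dvd v1 + k * v2" "\<not> p dvd v1 + (-k) * v2" by blast
  then show ?thesis
  proof cases
    case Y then show ?thesis using case_y[OF pr p2 aniso k Fv Fw Fvw nz] by blast
  next
    case Z then show ?thesis using case_y[OF pr p2 aniso k' Fv Fw Fvw nz] by blast
  next
    case N
    define a1 where "a1 = w1 + k*w2"
    define b1 where "b1 = - (v1 + k*v2)"
    define a2 where "a2 = w1 + (-k)*w2"
    define b2 where "b2 = - (v1 + (-k)*v2)"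
    define u11 where "u11 = a1*v1+b1*w1"
    define u12 where "u12 = a1*v2+b1*w2"
    define u13 where "u13 = a1*v3+b1*w3"
    define u14 where "u14 = a1*v4+b1*w4"
    define u21 where "u21 = a2*v1+b2*w1"
    define u22 where "u22 = a2*v2+b2*w2"
    define u23 where "u23 = a2*v3+b2*w3"
    define u24 where "u24 = a2*v4+b2*w4"
    have F1: "p dvd F4 u11 u12 u13 u14" unfolding u11_def u12_def u13_def u14_def
      by (rule comb_dvd[OF Fv Fw Fvw])
    have F2: "p dvd F4 u21 u22 u23 u24" unfolding u21_def u22_def u23_def u24_def
      by (rule comb_dvd[OF Fv Fw Fvw])
    have F12: "p dvd F4 (u11+u21) (u12+u22) (u13+u23) (u14+u24)"
    proof -
      have "F4 (u11+u21) (u12+u22) (u13+u23) (u14+u24) =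
        F4 ((a1+a2)*v1+(b1+b2)*w1) ((a1+a2)*v2+(b1+b2)*w2) ((a1+a2)*v3+(b1+b2)*w3) ((a1+a2)*v4+(b1+b2)*w4)"
        unfolding u11_def u12_def u13_def u14_def u21_def u22_def u23_def u24_def
        by (simp add: algebra_simps)
      then show ?thesis using comb_dvd[OF Fv Fw Fvw] by simp
    qed
    have y1: "u11 + k*u12 = 0" unfolding u11_def u12_def a1_def b1_def by (simp add: algebra_simps)
    have y2: "u21 + (-k)*u22 = 0" unfolding u21_def u22_def a2_def b2_def by (simp add: algebra_simps)
    have u1_34: "p dvd u13 \<and> p dvd u14" using iso_y0[OF aniso k F1] y1 by simp
    have u2_34: "p dvd u23 \<and> p dvd u24" using iso_y0[OF aniso k' F2] y2 by simp
    have eF: "F4 (u11+u21) (u12+u22) (u13+u23) (u14+u24) =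
       (u21 + k*u22) * (u11 - k*u12) + (k^2+1)*(u12+u22)^2 + (u13+u23)^2 + 2*(u14+u24)^2"
    proof -
      have "F4 (u11+u21) (u12+u22) (u13+u23) (u14+u24) =
       ((u11+u21) + k*(u12+u22)) * ((u11+u21) - k*(u12+u22)) + (k^2+1)*(u12+u22)^2 + (u13+u23)^2 + 2*(u14+u24)^2"
        unfolding F4_def by (simp add: algebra_simps power2_eq_square)
      moreover have "(u11+u21) + k*(u12+u22) = u21 + k*u22" using y1 by (simp add: algebra_simps)
      moreover have "(u11+u21) - k*(u12+u22) = u11 - k*u12" using y2 by (simp add: algebra_simps)
      ultimately show ?thesis by simp
    qed
    have "p dvd (u21 + k*u22) * (u11 - k*u12)"
    proof -
      have "(u21 + k*u22) * (u11 - k*u12) = F4 (u11+u21) (u12+u22) (u13+u23) (u14+u24)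
         - (k^2+1)*(u12+u22)^2 - (u13+u23)^2 - 2*(u14+u24)^2" using eF by simp
      moreover have "p dvd (u13+u23)^2" using u1_34 u2_34 by (simp add: power2_eq_square)
      moreover have "p dvd (u14+u24)^2" using u1_34 u2_34 by (simp add: power2_eq_square)
      ultimately show ?thesis using F12 k by (simp add: dvd_diff)
    qed
    then consider (A) "p dvd u11 - k*u12" | (B) "p dvd u21 + k*u22" using pr prime_dvd_mult_iff by blast
    then show ?thesis
    proof cases
      case A
      have "p dvd 2 * u11"
      proof -
        have e: "2*u11 = (u11 - k*u12) + (u11 + k*u12)" by simp
        show ?thesis unfolding e by (rule dvd_add) (simp_all add: A y1)
      qed
      then have p11: "p dvd u11" using pr p2 prime_dvd_mult_iff by blast
      have "p dvd 2 * k * u12"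
      proof -
        have e: "2*k*u12 = (u11 + k*u12) - (u11 - k*u12)" by simp
        show ?thesis unfolding e by (rule dvd_diff) (simp_all add: A y1)
      qed
      moreover have "\<not> p dvd k"
      proof
        assume "p dvd k" then have "p dvd k^2" by (simp add: power2_eq_square)
        then have "p dvd 1" using k by (metis dvd_add_right_iff)
        then show False using pr by (simp add: prime_int_iff)
      qed
      ultimately have p12: "p dvd u12" using pr p2 prime_dvd_mult_iff by blast
      have nb: "\<not> p dvd (v1 + k*v2)" using N by simp
      obtain i where i: "p dvd i * (v1 + k*v2) - 1" using inverse_ex[OF pr nb] by blast
      show ?thesis
        apply (rule exI[of _ "i*a1"])
        using solve1[OF i _ b1_def] p11 p12 u1_34 unfolding u11_def u12_def u13_def u14_def
        by blast
    next
      case B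
      have "p dvd 2 * u21"
      proof -
        have e: "2*u21 = (u21 + k*u22) + (u21 + (-k)*u22)" by simp
        show ?thesis unfolding e by (rule dvd_add) (use y2 B in \<open>simp_all add: algebra_simps\<close>)
      qed
      then have p21: "p dvd u21" using pr p2 prime_dvd_mult_iff by blast
      have "p dvd 2 * k * u22"
      proof -
        have e: "2*k*u22 = (u21 + k*u22) - (u21 + (-k)*u22)" by simp
        show ?thesis unfolding e by (rule dvd_diff) (use y2 B in \<open>simp_all add: algebra_simps\<close>)
      qed
      moreover have "\<not> p dvd k"
      proof
        assume "p dvd k" then have "p dvd k^2" by (simp add: power2_eq_square)
        then have "p dvd 1" using k by (metis dvd_add_right_iff)
        then show False using pr by (simp add: prime_int_iff)
      qed
      ultimately have p22: "p dvd u22" using pr p2 prime_dvd_mult_iff by blast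
      have nb: "\<not> p dvd (v1 + (-k)*v2)" using N by simp
      obtain i where i: "p dvd i * (v1 + (-k)*v2) - 1" using inverse_ex[OF pr nb] by blast
      show ?thesis
        apply (rule exI[of _ "i*a2"])
        using solve1[OF i _ b2_def] p21 p22 u2_34 unfolding u21_def u22_def u23_def u24_def
        by blast
    qed
  qed
qed

type_synonym q4 = "int \<times> int \<times> int \<times> int"

fun F4t :: "q4 \<Rightarrow> int" where "F4t (a,b,c,d) = F4 a b c d"
fun addv :: "q4 \<Rightarrow> q4 \<Rightarrow> q4" where "addv (a,b,c,d) (a',b',c',d') = (a+a',b+b',c+c',d+d')"
fun modv :: "int \<Rightarrow> q4 \<Rightarrow> q4" where "modv p (a,b,c,d) = (a mod p, b mod p, c mod p, d mod p)"
definition box :: "int \<Rightarrow> q4 set" where "box p = {0..<p} \<times> {0..<p} \<times> {0..<p} \<times> {0..<p}"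

lemma cmod: "[(a::int) mod p = a] (mod p)" by (simp add: cong_def)

lemma F4_mod: "F4 (a mod p) (b mod p) (c mod p) (d mod p) mod p = F4 a b c d mod p"
proof -
  have "[F4 (a mod p) (b mod p) (c mod p) (d mod p) = F4 a b c d] (mod p)"
    unfolding F4_def by (intro cong_add cong_mult cong_pow cong_refl cmod)
  then show ?thesis by (simp add: cong_def)
qed

lemma Q2_mod: "((a mod p)^2 + 2*(b mod p)^2) mod p = ((a::int)^2 + 2*b^2) mod p"
proof -
  have "[(a mod p)^2 + 2*(b mod p)^2 = a^2 + 2*b^2] (mod p)"
    by (intro cong_add cong_mult cong_pow cong_refl cmod)
  then show ?thesis by (simp add: cong_def)
qed

lemma card_p:
  fixes p k :: int and T :: "q4 set"
  assumes pr: "prime p" and p2: "\<not> p dvd 2"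
    and aniso: "\<And>a b. p dvd a^2 + 2*b^2 \<Longrightarrow> p dvd a \<and> p dvd b"
    and k: "p dvd k^2 + 1"
    and T: "T \<subseteq> box p" and FT: "\<forall>v\<in>T. p dvd F4t v"
    and FTT: "\<forall>v\<in>T. \<forall>w\<in>T. p dvd F4t (addv v w)"
  shows "card T \<le> nat p"
proof -
  have p1: "p > 1" using pr prime_gt_1_int by blast
  show ?thesis
  proof (cases "T \<subseteq> {(0,0,0,0)}")
    case True
    then have "card T \<le> card {(0::int,0::int,0::int,0::int)}" by (intro card_mono) auto
    then show ?thesis using p1 by simp
  next
    case False
    then obtain v1 v2 v3 v4 where vT: "(v1,v2,v3,v4) \<in> T" and vnz: "(v1,v2,v3,v4) \<noteq> (0,0,0,0)" by auto
    have vb: "0 \<le> v1 \<and> v1 < p \<and> 0 \<le> v2 \<and> v2 < p \<and> 0 \<le> v3 \<and> v3 < p \<and> 0 \<le> v4 \<and> v4 < p"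
      using T vT unfolding box_def by auto
    have zd: "\<And>x. 0 \<le> x \<Longrightarrow> x < p \<Longrightarrow> p dvd x \<Longrightarrow> x = 0"
    proof -
      fix x :: int assume a: "0 \<le> x" "x < p" "p dvd x"
      show "x = 0"
      proof (rule ccontr)
        assume "x \<noteq> 0" then have "0 < x" using a by simp
        then have "p \<le> x" using a zdvd_imp_le by blast
        then show False using a by simp
      qed
    qed
    have nz: "\<not> (p dvd v1 \<and> p dvd v2 \<and> p dvd v3 \<and> p dvd v4)"
      using zd vb vnz by blast
    have sub: "T \<subseteq> (\<lambda>c. modv p (c*v1, c*v2, c*v3, c*v4)) ` {0..<p}"
    proof
      fix w assume wT: "w \<in> T"
      obtain w1 w2 w3 w4 where w: "w = (w1,w2,w3,w4)" by (cases w) auto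
      have wb: "0 \<le> w1 \<and> w1 < p \<and> 0 \<le> w2 \<and> w2 < p \<and> 0 \<le> w3 \<and> w3 < p \<and> 0 \<le> w4 \<and> w4 < p"
        using T wT w unfolding box_def by auto
      have Fv: "p dvd F4 v1 v2 v3 v4" using FT vT by force
      have Fw: "p dvd F4 w1 w2 w3 w4" using FT wT w by force
      have Fvw: "p dvd F4 (v1+w1) (v2+w2) (v3+w3) (v4+w4)" using FTT vT wT w by force
      obtain c where c: "p dvd w1 - c*v1 \<and> p dvd w2 - c*v2 \<and> p dvd w3 - c*v3 \<and> p dvd w4 - c*v4"
        using core[OF pr p2 aniso k Fv Fw Fvw nz] by blast
      have eq: "\<And>x y. 0 \<le> x \<Longrightarrow> x < p \<Longrightarrow> p dvd x - c*y \<Longrightarrow> x = (c mod p * y) mod p"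
      proof -
        fix x y assume "0 \<le> x" "x < p" "p dvd x - c*y"
        then have e1: "x mod p = (c*y) mod p" by (simp only: mod_eq_dvd_iff)
        have e2: "x mod p = x" using \<open>0 \<le> x\<close> \<open>x < p\<close> by simp
        have e3: "(c mod p * y) mod p = (c*y) mod p" by (simp add: mod_mult_left_eq)
        show "x = (c mod p * y) mod p" by (subst e3, subst e2[symmetric], rule e1)
      qed
      have "w = modv p ((c mod p)*v1, (c mod p)*v2, (c mod p)*v3, (c mod p)*v4)"
        using eq c wb w by simp
      moreover have "c mod p \<in> {0..<p}" using p1 by simp
      ultimately show "w \<in> (\<lambda>c. modv p (c*v1, c*v2, c*v3, c*v4)) ` {0..<p}" by blast
    qed
    have "card T \<le> card ((\<lambda>c. modv p (c*v1, c*v2, c*v3, c*v4)) ` {0..<p})"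
      by (rule card_mono[OF _ sub]) simp
    also have "\<dots> \<le> card {0..<p}" by (rule card_image_le) simp
    finally show ?thesis by simp
  qed
qed


lemma enum5: "0 \<le> x \<Longrightarrow> x < (5::int) \<Longrightarrow> x = 0 \<or> x = 1 \<or> x = 2 \<or> x = 3 \<or> x = 4"
proof -
  assume a: "0 \<le> x" "x < 5"
  then have "nat x \<in> {..<5}" by simp
  then show ?thesis using a by (auto simp: lessThan_nat_numeral nat_eq_iff)
qed

lemma enum13: "0 \<le> x \<Longrightarrow> x < (13::int) \<Longrightarrow> x = 0 \<or> x = 1 \<or> x = 2 \<or> x = 3 \<or> x = 4 \<or> x = 5 \<or> x = 6 \<or> x = 7 \<or> x = 8 \<or> x = 9 \<or> x = 10 \<or> x = 11 \<or> x = 12"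
proof -
  assume a: "0 \<le> x" "x < 13"
  then have "nat x \<in> {..<13}" by simp
  then show ?thesis using a by (auto simp: lessThan_nat_numeral nat_eq_iff)
qed

lemma aniso5: "(5::int) dvd a^2 + 2*b^2 \<Longrightarrow> 5 dvd a \<and> 5 dvd b"
proof -
  assume h: "(5::int) dvd a^2 + 2*b^2"
  define x where "x = a mod 5"
  define y where "y = b mod 5"
  have "(x^2 + 2*y^2) mod 5 = (a^2 + 2*b^2) mod 5" unfolding x_def y_def by (rule Q2_mod)
  then have m: "(x^2 + 2*y^2) mod 5 = 0" using h by simp
  have "x = 0 \<or> x = 1 \<or> x = 2 \<or> x = 3 \<or> x = 4" unfolding x_def by (rule enum5) simp_all
  moreover have "y = 0 \<or> y = 1 \<or> y = 2 \<or> y = 3 \<or> y = 4" unfolding y_def by (rule enum5) simp_all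
  ultimately have "x = 0 \<and> y = 0" using m by (elim disjE) simp_all
  then show ?thesis unfolding x_def y_def by (simp add: dvd_eq_mod_eq_0)
qed

lemma aniso13: "(13::int) dvd a^2 + 2*b^2 \<Longrightarrow> 13 dvd a \<and> 13 dvd b"
proof -
  assume h: "(13::int) dvd a^2 + 2*b^2"
  define x where "x = a mod 13"
  define y where "y = b mod 13"
  have "(x^2 + 2*y^2) mod 13 = (a^2 + 2*b^2) mod 13" unfolding x_def y_def by (rule Q2_mod)
  then have m: "(x^2 + 2*y^2) mod 13 = 0" using h by simp
  have "x = 0 \<or> x = 1 \<or> x = 2 \<or> x = 3 \<or> x = 4 \<or> x = 5 \<or> x = 6 \<or> x = 7 \<or> x = 8 \<or> x = 9 \<or> x = 10 \<or> x = 11 \<or> x = 12" unfolding x_def by (rule enum13) simp_all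
  moreover have "y = 0 \<or> y = 1 \<or> y = 2 \<or> y = 3 \<or> y = 4 \<or> y = 5 \<or> y = 6 \<or> y = 7 \<or> y = 8 \<or> y = 9 \<or> y = 10 \<or> y = 11 \<or> y = 12" unfolding y_def by (rule enum13) simp_all
  ultimately have "x = 0 \<and> y = 0" using m by (elim disjE) simp_all
  then show ?thesis unfolding x_def y_def by (simp add: dvd_eq_mod_eq_0)
qed

lemma modv_F: "p dvd F4t v \<longleftrightarrow> p dvd F4t (modv p v)"
  by (cases v) (simp add: dvd_eq_mod_eq_0 F4_mod)

lemma dvd_F_sub: assumes "(q::int) dvd p" "p dvd F4t v" shows "q dvd F4t (modv q v)"
  using assms modv_F dvd_trans by blast

lemma modv_add: "modv q (addv (modv q v) (modv q w)) = modv q (addv v w)"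
  by (cases v; cases w) (simp add: mod_simps)


lemma T_proj:
  fixes T :: "q4 set" and q :: int
  assumes q: "q dvd 65" "q > 0"
    and FT: "\<forall>v\<in>T. 65 dvd F4t v"
    and FTT: "\<forall>v\<in>T. \<forall>w\<in>T. 65 dvd F4t (addv v w)"
  shows "modv q ` T \<subseteq> box q" "\<forall>v\<in>modv q ` T. q dvd F4t v"
    "\<forall>v\<in>modv q ` T. \<forall>w\<in>modv q ` T. q dvd F4t (addv v w)"
proof -
  show "modv q ` T \<subseteq> box q"
  proof
    fix x assume "x \<in> modv q ` T"
    then obtain v where "x = modv q v" by blast
    then show "x \<in> box q" using q by (cases v) (simp add: box_def)
  qed
  show "\<forall>v\<in>modv q ` T. q dvd F4t v" using FT dvd_F_sub[OF q(1)] by blast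
  show "\<forall>v\<in>modv q ` T. \<forall>w\<in>modv q ` T. q dvd F4t (addv v w)"
  proof (intro ballI)
    fix x y assume "x \<in> modv q ` T" "y \<in> modv q ` T"
    then obtain v w where vw: "v \<in> T" "w \<in> T" "x = modv q v" "y = modv q w" by blast
    have "q dvd F4t (modv q (addv v w))" using FTT vw dvd_F_sub[OF q(1)] by blast
    then have "q dvd F4t (modv q (addv x y))" using vw modv_add by simp
    then show "q dvd F4t (addv x y)" using modv_F by blast
  qed
qed


lemma card65:
  fixes T :: "q4 set"
  assumes T: "T \<subseteq> box 65"
    and FT: "\<forall>v\<in>T. 65 dvd F4t v"
    and FTT: "\<forall>v\<in>T. \<forall>w\<in>T. 65 dvd F4t (addv v w)"
  shows "card T \<le> 65"
proof -
  have d5: "(5::int) dvd 65" "(5::int) > 0" by simp_all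
  have d13: "(13::int) dvd 65" "(13::int) > 0" by simp_all
  note P5 = T_proj[OF d5 FT FTT]
  note P13 = T_proj[OF d13 FT FTT]
  have pr5: "prime (5::int)" by simp
  have pr13: "prime (13::int)" by simp
  have n5: "\<not> (5::int) dvd 2" by simp
  have n13: "\<not> (13::int) dvd 2" by simp
  have k5: "(5::int) dvd 2^2 + 1" by simp
  have k13: "(13::int) dvd 5^2 + 1" by simp
  have c5: "card (modv 5 ` T) \<le> 5"
    using card_p[OF pr5 n5 aniso5 k5 P5] by simp
  have c13: "card (modv 13 ` T) \<le> 13"
    using card_p[OF pr13 n13 aniso13 k13 P13] by simp
  have inj: "inj_on (\<lambda>v. (modv 5 v, modv 13 v)) T"
  proof (rule inj_onI)
    fix v w assume vw: "v \<in> T" "w \<in> T" "(modv 5 v, modv 13 v) = (modv 5 w, modv 13 w)"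
    obtain v1 v2 v3 v4 where v: "v = (v1,v2,v3,v4)" by (cases v) auto
    obtain w1 w2 w3 w4 where w: "w = (w1,w2,w3,w4)" by (cases w) auto
    have b: "v \<in> box 65" "w \<in> box 65" using vw T by auto
    have e: "\<And>x y::int. 0 \<le> x \<Longrightarrow> x < 65 \<Longrightarrow> 0 \<le> y \<Longrightarrow> y < 65 \<Longrightarrow> x mod 5 = y mod 5 \<Longrightarrow> x mod 13 = y mod 13 \<Longrightarrow> x = y"
    proof -
      fix x y :: int
      assume a: "0 \<le> x" "x < 65" "0 \<le> y" "y < 65" "x mod 5 = y mod 5" "x mod 13 = y mod 13"
      then have "5 dvd x - y" "13 dvd x - y" by (simp_all add: mod_eq_dvd_iff)
      moreover have "coprime (5::int) 13" by (rule primes_coprime) simp_all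
      ultimately have "5 * 13 dvd x - y" by (intro divides_mult) auto
      then obtain k where k: "x - y = 65 * k" by auto
      then have "k < 1" "k > -1" using a by linarith+
      then have "k = 0" by linarith
      then show "x = y" using k by simp
    qed
    have m5: "v1 mod 5 = w1 mod 5" "v2 mod 5 = w2 mod 5" "v3 mod 5 = w3 mod 5" "v4 mod 5 = w4 mod 5"
      using vw(3) unfolding v w by simp_all
    have m13: "v1 mod 13 = w1 mod 13" "v2 mod 13 = w2 mod 13" "v3 mod 13 = w3 mod 13" "v4 mod 13 = w4 mod 13"
      using vw(3) unfolding v w by simp_all
    have bv: "0 \<le> v1" "v1 < 65" "0 \<le> v2" "v2 < 65" "0 \<le> v3" "v3 < 65" "0 \<le> v4" "v4 < 65"
      using b(1) unfolding v box_def by simp_all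
    have bw: "0 \<le> w1" "w1 < 65" "0 \<le> w2" "w2 < 65" "0 \<le> w3" "w3 < 65" "0 \<le> w4" "w4 < 65"
      using b(2) unfolding w box_def by simp_all
    have "v1 = w1" by (rule e[OF bv(1,2) bw(1,2) m5(1) m13(1)])
    moreover have "v2 = w2" by (rule e[OF bv(3,4) bw(3,4) m5(2) m13(2)])
    moreover have "v3 = w3" by (rule e[OF bv(5,6) bw(5,6) m5(3) m13(3)])
    moreover have "v4 = w4" by (rule e[OF bv(7,8) bw(7,8) m5(4) m13(4)])
    ultimately show "v = w" unfolding v w by simp
  qed
  have "card T = card ((\<lambda>v. (modv 5 v, modv 13 v)) ` T)" using card_image[OF inj] by simp
  also have "\<dots> \<le> card (modv 5 ` T \<times> modv 13 ` T)"
  proof (rule card_mono)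
    show "finite (modv 5 ` T \<times> modv 13 ` T)"
    proof -
      have "finite (box 5)" "finite (box 13)" unfolding box_def by auto
      then show ?thesis using P5(1) P13(1) finite_subset by blast
    qed
  qed auto
  also have "\<dots> = card (modv 5 ` T) * card (modv 13 ` T)" by (simp add: card_cartesian_product)
  also have "\<dots> \<le> 5 * 13" using c5 c13 by (intro mult_mono) auto
  finally show ?thesis by simp
qed


lemma det_2x2: assumes A: "(A :: 'a :: comm_ring_1 mat) \<in> carrier_mat 2 2"
  shows "det A = A$$(0,0) * A$$(1,1) - A$$(0,1) * A$$(1,0)"
proof -
  have "det A = (\<Sum>i<2. A $$ (i,0) * cofactor A i 0)"
    by (rule laplace_expansion_column[OF A]) simp
  also have "\<dots> = A $$ (0,0) * cofactor A 0 0 + A $$ (1,0) * cofactor A 1 0"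
    by (simp add: numeral_2_eq_2)
  also have "cofactor A 0 0 = A$$(1,1)"
    unfolding cofactor_def using A
    by (subst det_single) (auto simp: mat_delete_def insert_index_def)
  also have "cofactor A 1 0 = - A$$(0,1)"
    unfolding cofactor_def using A
    by (subst det_single) (auto simp: mat_delete_def insert_index_def)
  finally show ?thesis by (simp add: algebra_simps)
qed

definition bd :: "'a :: zero mat \<Rightarrow> 'a mat \<Rightarrow> 'a mat" where
  "bd A B = four_block_mat A (0\<^sub>m (dim_row A) (dim_col B)) (0\<^sub>m (dim_row B) (dim_col A)) B"

lemma det_bd: assumes "(A :: 'a :: idom mat) \<in> carrier_mat n n" "B \<in> carrier_mat m m"
  shows "det (bd A B) = det A * det B"
  unfolding bd_def using assms
  by (intro det_four_block_mat_upper_right_zero[of _ n _ m]) auto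

lemma bd_carrier[simp]: "A \<in> carrier_mat n n \<Longrightarrow> B \<in> carrier_mat m m \<Longrightarrow> bd A B \<in> carrier_mat (n+m) (n+m)"
  unfolding bd_def by auto

lemma cpm_bd: assumes "(A :: 'a :: comm_ring_1 mat) \<in> carrier_mat n n" "B \<in> carrier_mat m m"
  shows "char_poly_matrix (bd A B) = bd (char_poly_matrix A) (char_poly_matrix B)"
  unfolding bd_def char_poly_matrix_def using assms
  by (intro eq_matI) auto

lemma char_poly_bd: assumes "(A :: 'a :: idom mat) \<in> carrier_mat n n" "B \<in> carrier_mat m m"
  shows "char_poly (bd A B) = char_poly A * char_poly B"
  unfolding char_poly_def cpm_bd[OF assms]
  using assms by (intro det_bd) (auto simp: char_poly_matrix_def)

definition blk :: "(nat \<Rightarrow> nat \<Rightarrow> 'a) \<Rightarrow> nat \<Rightarrow> 'a mat" where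
  "blk f k = mat 2 2 (\<lambda>(i,j). f (2*k+i) (2*k+j))"

lemma blk_carrier[simp]: "blk f k \<in> carrier_mat 2 2" unfolding blk_def by simp

lemma enum8: "(i::nat) < 8 \<Longrightarrow> i = 0 \<or> i = 1 \<or> i = 2 \<or> i = 3 \<or> i = 4 \<or> i = 5 \<or> i = 6 \<or> i = 7"
  by auto

lemma ss2: "2 \<le> (i::nat) \<Longrightarrow> Suc (Suc (i - 2)) = i" by arith

lemma bd_shift: fixes f :: "nat \<Rightarrow> nat \<Rightarrow> 'a :: zero"
  assumes "\<And>i j. i < 2 + m \<Longrightarrow> j < 2 + m \<Longrightarrow> (i < 2) \<noteq> (j < 2) \<Longrightarrow> f i j = 0"
  shows "mat (2+m) (2+m) (\<lambda>(i,j). f i j) = bd (mat 2 2 (\<lambda>(i,j). f i j)) (mat m m (\<lambda>(i,j). f (i+2) (j+2)))"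
  by (rule eq_matI) (use assms in \<open>auto simp: bd_def ss2\<close>)

definition bd8 :: "(nat \<Rightarrow> nat \<Rightarrow> 'a :: zero) \<Rightarrow> 'a mat" where
  "bd8 f = bd (mat 2 2 (\<lambda>(i,j). f i j)) (bd (mat 2 2 (\<lambda>(i,j). f (i+2) (j+2)))
     (bd (mat 2 2 (\<lambda>(i,j). f (i+2+2) (j+2+2))) (mat 2 2 (\<lambda>(i,j). f (i+2+2+2) (j+2+2+2)))))"

lemma bd8: fixes f :: "nat \<Rightarrow> nat \<Rightarrow> 'a :: zero"
  assumes z: "\<And>i j. i < 8 \<Longrightarrow> j < 8 \<Longrightarrow> i div 2 \<noteq> j div 2 \<Longrightarrow> f i j = 0"
  shows "mat 8 8 (\<lambda>(i,j). f i j) = bd8 f"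
proof -
  have 1: "mat (2+6) (2+6) (\<lambda>(i,j). f i j) = bd (mat 2 2 (\<lambda>(i,j). f i j)) (mat 6 6 (\<lambda>(i,j). f (i+2) (j+2)))"
    by (rule bd_shift) (rule z, auto)
  have 2: "mat (2+4) (2+4) (\<lambda>(i,j). f (i+2) (j+2)) = bd (mat 2 2 (\<lambda>(i,j). f (i+2) (j+2))) (mat 4 4 (\<lambda>(i,j). f (i+2+2) (j+2+2)))"
    by (rule bd_shift[where f = "\<lambda>i j. f (i+2) (j+2)"]) (rule z, auto)
  have 3: "mat (2+2) (2+2) (\<lambda>(i,j). f (i+2+2) (j+2+2)) = bd (mat 2 2 (\<lambda>(i,j). f (i+2+2) (j+2+2))) (mat 2 2 (\<lambda>(i,j). f (i+2+2+2) (j+2+2+2)))"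
    by (rule bd_shift[where f = "\<lambda>i j. f (i+2+2) (j+2+2)"]) (rule z, auto)
  show ?thesis using 1 2 3 unfolding bd8_def by simp
qed

lemma det_bd8: "det (bd8 (f :: nat \<Rightarrow> nat \<Rightarrow> 'a :: idom)) =
   det (mat 2 2 (\<lambda>(i,j). f i j)) * det (mat 2 2 (\<lambda>(i,j). f (i+2) (j+2))) *
   det (mat 2 2 (\<lambda>(i,j). f (i+2+2) (j+2+2))) * det (mat 2 2 (\<lambda>(i,j). f (i+2+2+2) (j+2+2+2)))"
proof -
  let ?A = "mat 2 2 (\<lambda>(i,j). f i j)"
  let ?B = "mat 2 2 (\<lambda>(i,j). f (i+2) (j+2))"
  let ?C = "mat 2 2 (\<lambda>(i,j). f (i+2+2) (j+2+2))"
  let ?D = "mat 2 2 (\<lambda>(i,j). f (i+2+2+2) (j+2+2+2))"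
  have c: "?A \<in> carrier_mat 2 2" "?B \<in> carrier_mat 2 2" "?C \<in> carrier_mat 2 2" "?D \<in> carrier_mat 2 2" by auto
  have c4: "bd ?C ?D \<in> carrier_mat (2+2) (2+2)" using c by (intro bd_carrier)
  have c6: "bd ?B (bd ?C ?D) \<in> carrier_mat (2+(2+2)) (2+(2+2))" using c c4 by (intro bd_carrier)
  show ?thesis unfolding bd8_def det_bd[OF c(1) c6] det_bd[OF c(2) c4] det_bd[OF c(3) c(4)] by (simp add: mult.assoc)
qed

lemma char_poly_bd8: "char_poly (bd8 (f :: nat \<Rightarrow> nat \<Rightarrow> 'a :: idom)) =
   char_poly (mat 2 2 (\<lambda>(i,j). f i j)) * char_poly (mat 2 2 (\<lambda>(i,j). f (i+2) (j+2))) *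
   char_poly (mat 2 2 (\<lambda>(i,j). f (i+2+2) (j+2+2))) * char_poly (mat 2 2 (\<lambda>(i,j). f (i+2+2+2) (j+2+2+2)))"
proof -
  let ?A = "mat 2 2 (\<lambda>(i,j). f i j)"
  let ?B = "mat 2 2 (\<lambda>(i,j). f (i+2) (j+2))"
  let ?C = "mat 2 2 (\<lambda>(i,j). f (i+2+2) (j+2+2))"
  let ?D = "mat 2 2 (\<lambda>(i,j). f (i+2+2+2) (j+2+2+2))"
  have c: "?A \<in> carrier_mat 2 2" "?B \<in> carrier_mat 2 2" "?C \<in> carrier_mat 2 2" "?D \<in> carrier_mat 2 2" by auto
  have c4: "bd ?C ?D \<in> carrier_mat (2+2) (2+2)" using c by (intro bd_carrier)
  have c6: "bd ?B (bd ?C ?D) \<in> carrier_mat (2+(2+2)) (2+(2+2))" using c c4 by (intro bd_carrier)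
  show ?thesis unfolding bd8_def char_poly_bd[OF c(1) c6] char_poly_bd[OF c(2) c4] char_poly_bd[OF c(3) c(4)] by (simp add: mult.assoc)
qed

lemma det_mat22: "det (mat 2 2 (\<lambda>(i,j). g i j) :: 'a :: comm_ring_1 mat) = g 0 0 * g 1 1 - g 0 1 * g 1 0"
  by (subst det_2x2) simp_all


lemma order_lin: "order a [:- c, 1:] = (if a = c then 1 else (0::nat))" for a c :: complex
proof (cases "a = c")
  case True then show ?thesis using order_power_n_n[of c 1] by simp
next
  case False then show ?thesis by (intro order_0I[THEN trans]) simp_all
qed

definition linp :: "real list \<Rightarrow> complex poly" where
  "linp cs = prod_list (map (\<lambda>c. [:- complex_of_real c, 1:]) cs)"

lemma linp_nz: "linp cs \<noteq> 0"
proof -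
  have "0 \<notin> set (map (\<lambda>c. [:- complex_of_real c, 1:]) cs)" by auto
  then show ?thesis unfolding linp_def by (subst prod_list_zero_iff) blast
qed

lemma order_linp: "order (complex_of_real x) (linp cs) = count_list cs x"
proof (induction cs)
  case Nil then show ?case unfolding linp_def by simp
next
  case (Cons c cs)
  have e: "linp (c # cs) = [:- complex_of_real c, 1:] * linp cs" unfolding linp_def by simp
  have nz: "[:- complex_of_real c, 1:] * linp cs \<noteq> 0" by (metis e linp_nz)
  have "order (complex_of_real x) (linp (c # cs)) = order (complex_of_real x) [:- complex_of_real c, 1:] + order (complex_of_real x) (linp cs)"
    by (simp only: e order_mult[OF nz])
  then show ?case using Cons by (simp add: order_lin)
qed

lemma root_linp: "poly (linp cs) (complex_of_real x) = 0 \<longleftrightarrow> x \<in> set cs"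
  unfolding linp_def by (induction cs) auto

lemma sum_count_filter:
  fixes P :: "real \<Rightarrow> bool"
  shows "(\<Sum>x\<in>{x. P x \<and> x \<in> set cs}. count_list cs x) = length (filter P cs)"
proof -
  have "(\<Sum>x\<in>{x. P x \<and> x \<in> set cs}. count_list cs x) = (\<Sum>x\<in>{x. P x \<and> x \<in> set cs}. count_list (filter P cs) x)"
  proof (intro sum.cong refl)
    fix x assume "x \<in> {x. P x \<and> x \<in> set cs}"
    then have "P x" by simp
    then show "count_list cs x = count_list (filter P cs) x" by (induction cs) auto
  qed
  also have "\<dots> = length (filter P cs)"
    by (rule sum_count_set) auto
  finally show ?thesis .
qed

lemma signature_linp:
  assumes "char_poly B = linp cs"
  shows "signature B = int (length (filter (\<lambda>c. c > 0) cs)) - int (length (filter (\<lambda>c. c < 0) cs))"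
proof -
  have "{x::real. x > 0 \<and> poly (char_poly B) (complex_of_real x) = 0} = {x. x > 0 \<and> x \<in> set cs}"
    using assms root_linp by auto
  moreover have "{x::real. x < 0 \<and> poly (char_poly B) (complex_of_real x) = 0} = {x. x < 0 \<and> x \<in> set cs}"
    using assms root_linp by auto
  moreover have "(\<Sum>x\<in>{x. x > 0 \<and> x \<in> set cs}. count_list cs x) = length (filter (\<lambda>c. c > 0) cs)"
    by (rule sum_count_filter)
  moreover have "(\<Sum>x\<in>{x. x < 0 \<and> x \<in> set cs}. count_list cs x) = length (filter (\<lambda>c. c < 0) cs)"
    by (rule sum_count_filter)
  ultimately show ?thesis unfolding signature_def assms order_linp by (simp only:)
qed


definition Vf :: "nat \<Rightarrow> nat \<Rightarrow> int" where
  "Vf i j = (if i div 2 = j div 2 then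
     (if even i then (if even j then (if i div 2 = 3 then 8 else 16) else 1)
      else (if even j then 0 else (if i div 2 = 3 then -2 else -1))) else 0)"

definition V0 :: "int mat" where "V0 = mat 8 8 (\<lambda>(i,j). Vf i j)"

lemma V0_carrier: "V0 \<in> carrier_mat 8 8" unfolding V0_def by simp

lemma Vf_off: "i div 2 \<noteq> j div 2 \<Longrightarrow> Vf i j = 0" unfolding Vf_def by simp

lemma skew_V0: "V0 - transpose_mat V0 = mat 8 8 (\<lambda>(i,j). Vf i j - Vf j i)"
  unfolding V0_def by (rule eq_matI) auto

lemma sym_V0: "sym_mat V0 = mat 8 8 (\<lambda>(i,j). Vf i j + Vf j i)"
  unfolding V0_def sym_mat_def by (rule eq_matI) auto

lemma seifert_V0: "seifert_matrix V0"
proof -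
  have "V0 - transpose_mat V0 = bd8 (\<lambda>i j. Vf i j - Vf j i)"
    unfolding skew_V0 by (rule bd8) (simp add: Vf_off)
  then have "det (V0 - transpose_mat V0) = 1"
    by (simp add: det_bd8 det_mat22 Vf_def)
  then show ?thesis unfolding seifert_matrix_def using V0_carrier by simp
qed

lemma det_sym_V0: "det (sym_mat V0) = 17850625"
proof -
  have "sym_mat V0 = bd8 (\<lambda>i j. Vf i j + Vf j i)"
    unfolding sym_V0 by (rule bd8) (simp add: Vf_off)
  then show ?thesis by (simp add: det_bd8 det_mat22 Vf_def)
qed

lemma knot_det_V0: "knot_det V0 = 17850625"
  unfolding knot_det_def det_sym_V0 by simp

definition Dp :: "int poly" where "Dp = [:-16, 33, -16:]"

lemma alex_V0: "alexander_poly V0 = Dp * Dp * Dp * Dp"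
proof -
  have "map_mat (\<lambda>a. [:a:]) V0 - map_mat (\<lambda>a. [:0, a:]) (transpose_mat V0) =
        mat 8 8 (\<lambda>(i,j). [:Vf i j:] - [:0, Vf j i:])"
    unfolding V0_def by (rule eq_matI) auto
  also have "\<dots> = bd8 (\<lambda>i j. [:Vf i j:] - [:0, Vf j i:])"
    by (rule bd8) (simp add: Vf_off)
  finally have e: "alexander_poly V0 = det (bd8 (\<lambda>i j. [:Vf i j:] - [:0, Vf j i:]))"
    unfolding alexander_poly_def by (rule arg_cong[where f = det])
  have b1: "([:16:] - [:0,16:]) * ([:-1:] - [:0,-1:]) - ([:1:] - [:0,0:]) * ([:0:] - [:0,1:]) = Dp"
    unfolding Dp_def by simp
  have b2: "([:8:] - [:0,8:]) * ([:-2:] - [:0,-2:]) - ([:1:] - [:0,0:]) * ([:0:] - [:0,1:]) = Dp"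
    unfolding Dp_def by simp
  let ?g = "\<lambda>i j. [:Vf i j:] - [:0, Vf j i:]"
  have d1: "det (mat 2 2 (\<lambda>(i,j). ?g i j)) = Dp" using b1 by (simp add: det_mat22 Vf_def)
  have d2: "det (mat 2 2 (\<lambda>(i,j). ?g (i+2) (j+2))) = Dp" using b1 by (simp add: det_mat22 Vf_def)
  have d3: "det (mat 2 2 (\<lambda>(i,j). ?g (i+2+2) (j+2+2))) = Dp" using b1 by (simp add: det_mat22 Vf_def)
  have d4: "det (mat 2 2 (\<lambda>(i,j). ?g (i+2+2+2) (j+2+2+2))) = Dp" using b2 by (simp add: det_mat22 Vf_def)
  show ?thesis unfolding e det_bd8 d1 d2 d3 d4 ..
qed

lemma alex_norm_V0: "alexander_is_norm V0"
proof -
  have r: "reflect_poly Dp = Dp" unfolding Dp_def by (simp add: reflect_poly_def)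
  have "monom 1 0 * alexander_poly V0 = monom 1 0 * (Dp * Dp) * reflect_poly (Dp * Dp)"
    unfolding alex_V0 reflect_poly_mult r by (simp add: mult.assoc)
  then show ?thesis unfolding alexander_is_norm_def by blast
qed


lemma cp22: "char_poly (mat 2 2 (\<lambda>(i,j). h i j)) = [:h 0 0 * h 1 1 - h 0 1 * h 1 0, - (h 0 0 + h 1 1), 1:]"
  for h :: "nat \<Rightarrow> nat \<Rightarrow> 'a :: comm_ring_1"
proof -
  have "char_poly (mat 2 2 (\<lambda>(i,j). h i j)) = det (mat 2 2 (\<lambda>(i,j). (if i = j then [:0,1:] else 0) + [:- h i j:]))"
    unfolding char_poly_def char_poly_matrix_def by (intro arg_cong[where f = det] eq_matI) auto
  also have "\<dots> = [:h 0 0 * h 1 1 - h 0 1 * h 1 0, - (h 0 0 + h 1 1), 1:]"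
    by (simp add: det_mat22 algebra_simps)
  finally show ?thesis .
qed

definition rp :: "real \<Rightarrow> real \<Rightarrow> real" where "rp t d = (t + sqrt (t^2 - 4*d)) / 2"
definition rm :: "real \<Rightarrow> real \<Rightarrow> real" where "rm t d = (t - sqrt (t^2 - 4*d)) / 2"

lemma quad_lin: assumes "d \<le> 0"
  shows "[:complex_of_real d, - complex_of_real t, 1:] = linp [rp t d, rm t d]"
proof -
  have "t^2 \<ge> 0" by simp
  then have D: "t^2 - 4*d \<ge> 0" using assms by linarith
  have s: "(sqrt (t^2 - 4*d))^2 = t^2 - 4*d" using D by simp
  have sum: "rp t d + rm t d = t" unfolding rp_def rm_def by (simp add: field_simps)
  have prod: "rp t d * rm t d = d"
  proof -
    have "rp t d * rm t d = (t^2 - (sqrt (t^2 - 4*d))^2) / 4" unfolding rp_def rm_def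
      by (simp add: field_simps power2_eq_square)
    then show ?thesis using s by simp
  qed
  have "linp [rp t d, rm t d] = [:- complex_of_real (rp t d), 1:] * [:- complex_of_real (rm t d), 1:]"
    unfolding linp_def by simp
  also have "\<dots> = [:complex_of_real (rp t d * rm t d), - complex_of_real (rp t d + rm t d), 1:]"
    by (simp add: algebra_simps)
  finally show ?thesis unfolding sum prod by simp
qed

lemma rp_rm_neg: assumes "d < 0" shows "rp t d > 0" "rm t d < 0"
proof -
  have "t^2 < t^2 - 4*d" using assms by simp
  then have "sqrt (t^2) < sqrt (t^2 - 4*d)" by (rule real_sqrt_less_mono)
  then have a: "\<bar>t\<bar> < sqrt (t^2 - 4*d)" by simp
  have "t + sqrt (t^2 - 4*d) > 0" "t - sqrt (t^2 - 4*d) < 0" using a by linarith+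
  then show "rp t d > 0" "rm t d < 0" unfolding rp_def rm_def by simp_all
qed

lemma rp_rm_zero: "rp 0 0 = 0" "rm 0 0 = 0" unfolding rp_def rm_def by simp_all

lemma block_cp:
  fixes h :: "nat \<Rightarrow> nat \<Rightarrow> complex" and a c r :: real
  assumes "h 0 0 = complex_of_real (2*a*r)" "h 1 1 = complex_of_real (2*c*r)"
    "h 0 1 * h 1 0 = complex_of_real (2*r)" "a * c = -16" "r \<ge> 0"
  shows "char_poly (mat 2 2 (\<lambda>(i,j). h i j)) = linp [rp (2*(a+c)*r) (-64*r^2 - 2*r), rm (2*(a+c)*r) (-64*r^2 - 2*r)]"
proof -
  have "r^2 \<ge> 0" by simp
  then have d: "-64*r^2 - 2*r \<le> 0" using assms(5) by linarith
  have e1: "h 0 0 * h 1 1 - h 0 1 * h 1 0 = complex_of_real (-64*r^2 - 2*r)"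
  proof -
    have "h 0 0 * h 1 1 - h 0 1 * h 1 0 = complex_of_real (4*(a*c)*r^2 - 2*r)"
      unfolding assms(1-3) by (simp add: power2_eq_square algebra_simps)
    then show ?thesis using assms(4) by simp
  qed
  have e2: "- (h 0 0 + h 1 1) = - complex_of_real (2*(a+c)*r)"
    unfolding assms(1,2) by (simp add: algebra_simps)
  have "char_poly (mat 2 2 (\<lambda>(i,j). h i j)) = [:complex_of_real (-64*r^2 - 2*r), - complex_of_real (2*(a+c)*r), 1:]"
    by (simp only: cp22 e1 e2)
  also have "\<dots> = linp [rp (2*(a+c)*r) (-64*r^2 - 2*r), rm (2*(a+c)*r) (-64*r^2 - 2*r)]"
    by (rule quad_lin[OF d])
  finally show ?thesis .
qed

lemma linp_append: "linp (xs @ ys) = linp xs * linp ys" unfolding linp_def by simp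

lemma cnj_id1: "(1 - \<xi>) * complex_of_int n + (1 - cnj \<xi>) * complex_of_int n = complex_of_real (2 * of_int n * (1 - Re \<xi>))"
  by (simp add: complex_eq_iff algebra_simps)

lemma cnj_id2: assumes "cmod \<xi> = 1" shows "(1 - \<xi>) * (1 - cnj \<xi>) = complex_of_real (2 * (1 - Re \<xi>))"
proof -
  have n: "\<xi> * cnj \<xi> = 1" using complex_norm_square[of \<xi>] assms by simp
  have "(1 - \<xi>) * (1 - cnj \<xi>) = 1 - (\<xi> + cnj \<xi>) + \<xi> * cnj \<xi>" by (simp add: algebra_simps)
  also have "\<dots> = 2 - (\<xi> + cnj \<xi>)" using n by simp
  also have "\<xi> + cnj \<xi> = complex_of_real (2 * Re \<xi>)" by (rule complex_add_cnj)
  finally show ?thesis by (simp add: algebra_simps)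
qed

lemma block_g:
  fixes h :: "nat \<Rightarrow> nat \<Rightarrow> complex" and a c :: int
  assumes x: "cmod \<xi> = 1"
    and h: "h 0 0 = (1 - \<xi>) * of_int a + (1 - cnj \<xi>) * of_int a"
     "h 1 1 = (1 - \<xi>) * of_int c + (1 - cnj \<xi>) * of_int c"
     "h 0 1 = (1 - \<xi>) * 1 + (1 - cnj \<xi>) * 0"
     "h 1 0 = (1 - \<xi>) * 0 + (1 - cnj \<xi>) * 1"
    and ac: "a * c = -16"
  shows "char_poly (mat 2 2 (\<lambda>(i,j). h i j)) =
    linp [rp (2*(of_int a + of_int c)*(1 - Re \<xi>)) (-64*(1 - Re \<xi>)^2 - 2*(1 - Re \<xi>)),
          rm (2*(of_int a + of_int c)*(1 - Re \<xi>)) (-64*(1 - Re \<xi>)^2 - 2*(1 - Re \<xi>))]"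
proof (rule block_cp)
  show "h 0 0 = complex_of_real (2 * of_int a * (1 - Re \<xi>))" using h(1) cnj_id1 by simp
  show "h 1 1 = complex_of_real (2 * of_int c * (1 - Re \<xi>))" using h(2) cnj_id1 by simp
  show "h 0 1 * h 1 0 = complex_of_real (2 * (1 - Re \<xi>))" using h(3,4) cnj_id2[OF x] by simp
  show "(of_int a :: real) * of_int c = -16" using ac by (metis of_int_minus of_int_mult of_int_numeral)
  show "0 \<le> 1 - Re \<xi>" using complex_Re_le_cmod[of \<xi>] x by simp
qed

lemma tl_V0: assumes x: "cmod \<xi> = 1" shows "tl_signature V0 \<xi> = 0"
proof -
  define g where "g = (\<lambda>i j. (1 - \<xi>) * complex_of_int (Vf i j) + (1 - cnj \<xi>) * complex_of_int (Vf j i))"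
  have "(1 - \<xi>) \<cdot>\<^sub>m map_mat of_int V0 + (1 - cnj \<xi>) \<cdot>\<^sub>m map_mat of_int (transpose_mat V0) = mat 8 8 (\<lambda>(i,j). g i j)"
    unfolding V0_def g_def by (rule eq_matI) auto
  also have "\<dots> = bd8 g" by (rule bd8) (simp add: g_def Vf_off)
  finally have B: "(1 - \<xi>) \<cdot>\<^sub>m map_mat of_int V0 + (1 - cnj \<xi>) \<cdot>\<^sub>m map_mat of_int (transpose_mat V0) = bd8 g" .
  define r where "r = 1 - Re \<xi>"
  define d where "d = -64*r^2 - 2*r"
  define t1 where "t1 = 2*(of_int 16 + of_int (-1))*r"
  define t2 where "t2 = 2*(of_int 8 + of_int (-2))*r"
  have c1: "char_poly (mat 2 2 (\<lambda>(i,j). g i j)) = linp [rp t1 d, rm t1 d]"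
    unfolding t1_def d_def r_def by (rule block_g[OF x]) (simp_all add: g_def Vf_def)
  have c2: "char_poly (mat 2 2 (\<lambda>(i,j). g (i+2) (j+2))) = linp [rp t1 d, rm t1 d]"
    unfolding t1_def d_def r_def by (rule block_g[OF x]) (simp_all add: g_def Vf_def)
  have c3: "char_poly (mat 2 2 (\<lambda>(i,j). g (i+2+2) (j+2+2))) = linp [rp t1 d, rm t1 d]"
    unfolding t1_def d_def r_def by (rule block_g[OF x]) (simp_all add: g_def Vf_def)
  have c4: "char_poly (mat 2 2 (\<lambda>(i,j). g (i+2+2+2) (j+2+2+2))) = linp [rp t2 d, rm t2 d]"
    unfolding t2_def d_def r_def by (rule block_g[OF x]) (simp_all add: g_def Vf_def)
  have cp: "char_poly (bd8 g) = linp [rp t1 d, rm t1 d, rp t1 d, rm t1 d, rp t1 d, rm t1 d, rp t2 d, rm t2 d]"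
    unfolding char_poly_bd8 c1 c2 c3 c4 linp_append[symmetric] by simp
  have r0: "r \<ge> 0" unfolding r_def using complex_Re_le_cmod[of \<xi>] x by simp
  show ?thesis
  proof (cases "r = 0")
    case True
    then have "t1 = 0" "t2 = 0" "d = 0" unfolding t1_def t2_def d_def by simp_all
    then show ?thesis unfolding tl_signature_def B using signature_linp[OF cp] rp_rm_zero by simp
  next
    case False
    then have "r > 0" using r0 by simp
    moreover have "r^2 \<ge> 0" by simp
    ultimately have "d < 0" unfolding d_def by linarith
    then have s: "rp t1 d > 0" "rm t1 d < 0" "rp t2 d > 0" "rm t2 d < 0" using rp_rm_neg by auto
    then have s2: "\<not> rp t1 d < 0" "\<not> 0 < rm t1 d" "\<not> rp t2 d < 0" "\<not> 0 < rm t2 d" by auto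
    show ?thesis unfolding tl_signature_def B signature_linp[OF cp] using s s2 by simp
  qed
qed


lemma sum8: "(\<Sum>j\<in>{0..<8::nat}. f j) = f 0 + f 1 + f 2 + f 3 + f 4 + f 5 + f 6 + f 7"
  by (simp add: atLeast0LessThan lessThan_nat_numeral add_ac)

abbreviation Am :: "int mat" where "Am \<equiv> sym_mat V0"

lemma dimV0[simp]: "dim_row V0 = 8" "dim_col V0 = 8" unfolding V0_def by simp_all

lemma Am_mult: assumes z: "z \<in> carrier_vec 8"
  shows "Am *\<^sub>v z = vec 8 (\<lambda>i. \<Sum>j\<in>{0..<8}. (Vf i j + Vf j i) * z $ j)"
  unfolding sym_V0 using z by (intro eq_vecI) (auto simp: scalar_prod_def)

definition ph :: "int vec \<Rightarrow> q4" where
  "ph x = (x$0 - 32*x$1, x$2 - 32*x$3, x$4 - 32*x$5, x$6 - 16*x$7)"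

definition phm :: "int vec \<Rightarrow> q4" where "phm x = modv 65 (ph x)"

lemma ph_Am: assumes z: "z \<in> carrier_vec 8"
  shows "ph (Am *\<^sub>v z) = (65 * z$1, 65 * z$3, 65 * z$5, 65 * z$7)"
  unfolding ph_def Am_mult[OF z] by (simp add: sum8 Vf_def algebra_simps)

lemma ph_diff: assumes "x \<in> carrier_vec 8" "y \<in> carrier_vec 8"
  shows "ph (x - y) = (fst (ph x) - fst (ph y), fst (snd (ph x)) - fst (snd (ph y)),
     fst (snd (snd (ph x))) - fst (snd (snd (ph y))), snd (snd (snd (ph x))) - snd (snd (snd (ph y))))"
  unfolding ph_def using assms by (simp add: algebra_simps)

lemma hrel_iff: assumes x: "x \<in> carrier_vec 8" and y: "y \<in> carrier_vec 8"
  shows "(x, y) \<in> hrel V0 \<longleftrightarrow> phm x = phm y"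
proof
  assume "(x, y) \<in> hrel V0"
  then obtain z where z: "z \<in> carrier_vec 8" and e: "x - y = Am *\<^sub>v z" unfolding hrel_def by auto
  have "ph (x - y) = (65 * z$1, 65 * z$3, 65 * z$5, 65 * z$7)" unfolding e by (rule ph_Am[OF z])
  then show "phm x = phm y" unfolding phm_def ph_diff[OF x y]
    by (cases "ph x", cases "ph y") (auto simp: mod_eq_dvd_iff)
next
  assume h: "phm x = phm y"
  obtain p0 p1 p2 p3 where px: "ph x = (p0,p1,p2,p3)" by (cases "ph x") auto
  obtain q0 q1 q2 q3 where py: "ph y = (q0,q1,q2,q3)" by (cases "ph y") auto
  have "65 dvd p0 - q0" "65 dvd p1 - q1" "65 dvd p2 - q2" "65 dvd p3 - q3"
    using h unfolding phm_def px py by (simp_all add: mod_eq_dvd_iff)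
  then obtain m0 m1 m2 m3 where m: "p0 - q0 = 65*m0" "p1 - q1 = 65*m1" "p2 - q2 = 65*m2" "p3 - q3 = 65*m3"
    by (meson dvdE)
  define d where "d = x - y"
  have dc: "d \<in> carrier_vec 8" unfolding d_def using x y by simp
  define z where "z = vec 8 (\<lambda>i. if i = 0 then d$1 + 2*m0 else if i = 1 then m0
      else if i = 2 then d$3 + 2*m1 else if i = 3 then m1
      else if i = 4 then d$5 + 2*m2 else if i = 5 then m2
      else if i = 6 then d$7 + 4*m3 else m3)"
  have zc: "z \<in> carrier_vec 8" unfolding z_def by simp
  have pd: "ph d = (65*m0, 65*m1, 65*m2, 65*m3)" unfolding d_def ph_diff[OF x y] px py using m by simp
  have "d = Am *\<^sub>v z"
  proof (rule eq_vecI)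
    show "dim_vec d = dim_vec (Am *\<^sub>v z)" using dc by (simp add: sym_V0)
    fix i assume "i < dim_vec (Am *\<^sub>v z)"
    then have i: "i < 8" by (simp add: sym_V0)
    have p: "d$0 - 32*d$1 = 65*m0" "d$2 - 32*d$3 = 65*m1" "d$4 - 32*d$5 = 65*m2" "d$6 - 16*d$7 = 65*m3"
      using pd unfolding ph_def by simp_all
    show "d $ i = (Am *\<^sub>v z) $ i" unfolding Am_mult[OF zc] using enum8[OF i] p
      by (elim disjE) (simp_all add: sum8 Vf_def z_def algebra_simps)
  qed
  then show "(x, y) \<in> hrel V0" unfolding hrel_def using x y zc d_def by auto
qed


lemma hrel_mem: "(x, y) \<in> hrel V0 \<longleftrightarrow> x \<in> carrier_vec 8 \<and> y \<in> carrier_vec 8 \<and> phm x = phm y"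
proof (cases "x \<in> carrier_vec 8 \<and> y \<in> carrier_vec 8")
  case True then show ?thesis using hrel_iff[of x y] by simp
next
  case False
  then have "(x, y) \<notin> hrel V0" unfolding hrel_def by auto
  then show ?thesis using False by blast
qed

lemma equiv_h: "equiv (carrier_vec 8) (hrel V0)"
proof (rule equivI)
  show "hrel V0 \<subseteq> carrier_vec 8 \<times> carrier_vec 8"
  proof
    fix p assume "p \<in> hrel V0" then show "p \<in> carrier_vec 8 \<times> carrier_vec 8"
      by (cases p) (simp add: hrel_mem)
  qed
  show "refl_on (carrier_vec 8) (hrel V0)"
    by (rule refl_onI) (simp add: hrel_mem)
  show "sym (hrel V0)"
    by (rule symI) (simp add: hrel_mem)
  show "trans (hrel V0)"
    by (rule transI) (simp add: hrel_mem)
qed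

lemma carrier_H1: "carrier (H1 V0) = carrier_vec 8 // hrel V0"
  unfolding H1_def by simp

lemma class_mem: assumes X: "X \<in> carrier (H1 V0)" and x: "x \<in> X"
  shows "x \<in> carrier_vec 8" "X = hrel V0 `` {x}"
proof -
  obtain a where a: "a \<in> carrier_vec 8" "X = hrel V0 `` {a}" using X unfolding carrier_H1 quotient_def by auto
  then have ax: "(a, x) \<in> hrel V0" using x by auto
  then show "x \<in> carrier_vec 8" unfolding hrel_mem by auto
  show "X = hrel V0 `` {x}" using a(2) equiv_class_eq[OF equiv_h ax] by simp
qed

lemma class_self: "x \<in> carrier_vec 8 \<Longrightarrow> x \<in> hrel V0 `` {x}"
  by (simp add: hrel_mem)

lemma class_in: "x \<in> carrier_vec 8 \<Longrightarrow> hrel V0 `` {x} \<in> carrier (H1 V0)"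
  unfolding carrier_H1 by (rule quotientI)

lemma class_ne: "X \<in> carrier (H1 V0) \<Longrightarrow> \<exists>x. x \<in> X"
  unfolding carrier_H1 quotient_def using class_self by auto

definition Phi :: "int vec set \<Rightarrow> q4" where "Phi X = phm (SOME x. x \<in> X)"

lemma Phi_mem: assumes X: "X \<in> carrier (H1 V0)" and x: "x \<in> X" shows "Phi X = phm x"
proof -
  have s: "(SOME x. x \<in> X) \<in> X" using x by (rule someI)
  have "X = hrel V0 `` {x}" using class_mem[OF X x] by simp
  then have "(x, SOME x. x \<in> X) \<in> hrel V0" using s by simp
  then show ?thesis unfolding Phi_def hrel_mem by simp
qed

lemma Phi_inj: "inj_on Phi (carrier (H1 V0))"
proof (rule inj_onI)
  fix X Y assume X: "X \<in> carrier (H1 V0)" and Y: "Y \<in> carrier (H1 V0)" and e: "Phi X = Phi Y"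
  obtain x where x: "x \<in> X" using class_ne[OF X] by blast
  obtain y where y: "y \<in> Y" using class_ne[OF Y] by blast
  have xc: "x \<in> carrier_vec 8" and Xe: "X = hrel V0 `` {x}" using class_mem[OF X x] by auto
  have yc: "y \<in> carrier_vec 8" and Ye: "Y = hrel V0 `` {y}" using class_mem[OF Y y] by auto
  have "phm x = phm y" using e Phi_mem[OF X x] Phi_mem[OF Y y] by simp
  then have "(x, y) \<in> hrel V0" using hrel_iff[OF xc yc] by simp
  then show "X = Y" unfolding Xe Ye using equiv_class_eq[OF equiv_h] by simp
qed

lemma modv_box: "p > 0 \<Longrightarrow> modv p v \<in> box p"
  by (cases v) (simp add: box_def)

lemma Phi_box: "Phi X \<in> box 65"
  unfolding Phi_def phm_def by (rule modv_box) simp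

lemma finite_box: "finite (box p)" unfolding box_def by simp

lemma finite_H1: "finite (carrier (H1 V0))"
proof -
  have "Phi ` carrier (H1 V0) \<subseteq> box 65" using Phi_box by auto
  then have "finite (Phi ` carrier (H1 V0))" using finite_box finite_subset by blast
  then show ?thesis using finite_imageD Phi_inj by blast
qed


definition Cf :: "nat \<Rightarrow> nat \<Rightarrow> int" where
  "Cf i j = (if i div 2 = j div 2 then
     (if even i then (if even j then (if i div 2 = 3 then 4 else 2) else 1)
      else (if even j then 1 else (if i div 2 = 3 then -16 else -32))) else 0)"

definition Cm :: "int mat" where "Cm = mat 8 8 (\<lambda>(i,j). 274625 * Cf i j)"

lemma Am_carrier: "Am \<in> carrier_mat 8 8" unfolding sym_V0 by simp
lemma Cm_carrier: "Cm \<in> carrier_mat 8 8" unfolding Cm_def by simp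

lemma AmC: "Am * Cm = 17850625 \<cdot>\<^sub>m 1\<^sub>m 8"
proof (rule eq_matI)
  fix i j assume "i < dim_row (17850625 \<cdot>\<^sub>m 1\<^sub>m 8 :: int mat)" "j < dim_col (17850625 \<cdot>\<^sub>m 1\<^sub>m 8 :: int mat)"
  then have i: "i < 8" and j: "j < 8" by simp_all
  have "(Am * Cm) $$ (i,j) = (\<Sum>k\<in>{0..<8}. (Vf i k + Vf k i) * (274625 * Cf k j))"
    unfolding sym_V0 Cm_def using i j by (simp add: scalar_prod_def)
  also have "\<dots> = (17850625 \<cdot>\<^sub>m 1\<^sub>m 8 :: int mat) $$ (i,j)"
    unfolding sum8 using enum8[OF i] enum8[OF j] i j
    by (elim disjE) (simp_all add: Vf_def Cf_def)
  finally show "(Am * Cm) $$ (i,j) = (17850625 \<cdot>\<^sub>m 1\<^sub>m 8 :: int mat) $$ (i,j)" .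
qed (simp_all add: sym_V0 Cm_def)

lemma adj_Am: "adj_mat Am = Cm"
proof -
  note A = Am_carrier
  have adjc: "adj_mat Am \<in> carrier_mat 8 8" using adj_mat(1)[OF A] .
  have adjA: "adj_mat Am * Am = 17850625 \<cdot>\<^sub>m 1\<^sub>m 8" using adj_mat(3)[OF A] det_sym_V0 by simp
  have "17850625 \<cdot>\<^sub>m adj_mat Am = adj_mat Am * (17850625 \<cdot>\<^sub>m 1\<^sub>m 8)"
    using mult_smult_distrib[OF adjc one_carrier_mat, of 17850625] adjc by simp
  also have "\<dots> = adj_mat Am * (Am * Cm)" unfolding AmC ..
  also have "\<dots> = (adj_mat Am * Am) * Cm" using adjc A Cm_carrier by simp
  also have "\<dots> = 17850625 \<cdot>\<^sub>m Cm" unfolding adjA using mult_smult_assoc_mat[of "1\<^sub>m 8" 8 8 Cm 8 17850625] Cm_carrier by simp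
  finally have e: "17850625 \<cdot>\<^sub>m adj_mat Am = 17850625 \<cdot>\<^sub>m Cm" .
  show ?thesis
  proof (rule eq_matI)
    fix i j assume "i < dim_row Cm" "j < dim_col Cm"
    then have ij: "i < 8" "j < 8" using Cm_carrier by auto
    have "(17850625 \<cdot>\<^sub>m adj_mat Am) $$ (i,j) = (17850625 \<cdot>\<^sub>m Cm) $$ (i,j)" using e by simp
    then show "adj_mat Am $$ (i,j) = Cm $$ (i,j)" using ij adjc Cm_carrier by simp
  qed (use adjc Cm_carrier in auto)
qed


definition Sx :: "int vec \<Rightarrow> int" where
  "Sx x = 2*(x$0)^2 + 2*(x$0)*(x$1) - 32*(x$1)^2 + 2*(x$2)^2 + 2*(x$2)*(x$3) - 32*(x$3)^2
        + 2*(x$4)^2 + 2*(x$4)*(x$5) - 32*(x$5)^2 + 4*(x$6)^2 + 2*(x$6)*(x$7) - 16*(x$7)^2"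

definition Lf :: "int vec \<Rightarrow> nat \<Rightarrow> int" where
  "Lf x i = (if i = 0 then 2*x$0 + x$1 else if i = 1 then x$0 - 32*x$1
    else if i = 2 then 2*x$2 + x$3 else if i = 3 then x$2 - 32*x$3
    else if i = 4 then 2*x$4 + x$5 else if i = 5 then x$4 - 32*x$5
    else if i = 6 then 4*x$6 + x$7 else x$6 - 16*x$7)"

lemma Cm_mult: assumes x: "x \<in> carrier_vec 8"
  shows "Cm *\<^sub>v x = vec 8 (\<lambda>i. 274625 * (\<Sum>j\<in>{0..<8}. Cf i j * x $ j))"
  unfolding Cm_def using x by (intro eq_vecI) (auto simp: scalar_prod_def sum_distrib_left mult.assoc)

lemma sp_Cm: assumes x: "x \<in> carrier_vec 8"
  shows "scalar_prod x (Cm *\<^sub>v x) = 274625 * Sx x"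
proof -
  have "scalar_prod x (Cm *\<^sub>v x) = (\<Sum>i\<in>{0..<8}. x $ i * (274625 * (\<Sum>j\<in>{0..<8}. Cf i j * x $ j)))"
    unfolding Cm_mult[OF x] by (simp add: scalar_prod_def)
  also have "\<dots> = (\<Sum>i\<in>{0..<8}. x $ i * (274625 * Lf x i))"
  proof (rule sum.cong[OF refl])
    fix i assume "i \<in> {0..<(8::nat)}"
    then have i: "i < 8" by simp
    show "x $ i * (274625 * (\<Sum>j\<in>{0..<8}. Cf i j * x $ j)) = x $ i * (274625 * Lf x i)"
      unfolding sum8 using enum8[OF i] by (elim disjE) (simp_all add: Cf_def Lf_def)
  qed
  also have "\<dots> = 274625 * Sx x"
    unfolding sum8 by (simp add: Lf_def Sx_def power2_eq_square algebra_simps)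
  finally show ?thesis .
qed

lemma lk_V0: assumes x: "x \<in> carrier_vec 8"
  shows "lk_rep V0 x x = frac (of_int (Sx x) / 65)"
proof -
  have "lk_rep V0 x x = frac (of_int (274625 * Sx x) / of_int 17850625)"
    unfolding lk_rep_def adj_Am sp_Cm[OF x] det_sym_V0 ..
  also have "(of_int (274625 * Sx x) / of_int 17850625 :: rat) = of_int (Sx x) / 65"
    by simp
  finally show ?thesis .
qed

lemma frac65: "frac (of_int n / 65 :: rat) = 0 \<longleftrightarrow> 65 dvd n"
proof
  assume "frac (of_int n / 65 :: rat) = 0"
  then have "(of_int n / 65 :: rat) \<in> \<int>" by (simp add: frac_eq_0_iff)
  then obtain m where "(of_int n / 65 :: rat) = of_int m" by (auto elim: Ints_cases)
  then have "(of_int n :: rat) = of_int (65 * m)" by (simp add: field_simps)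
  then have "n = 65 * m" by (simp only: of_int_eq_iff)
  then show "65 dvd n" by simp
next
  assume "65 dvd n"
  then obtain m where "n = 65 * m" by auto
  then have "(of_int n / 65 :: rat) = of_int m" by simp
  then show "frac (of_int n / 65 :: rat) = 0" by (simp add: frac_eq_0_iff)
qed

lemma Sx_F: "Sx x = 2 * F4t (ph x) + 65 * ((2*x$0*x$1 - 32*(x$1)^2) + (2*x$2*x$3 - 32*(x$3)^2)
   + (2*x$4*x$5 - 32*(x$5)^2) + (2*x$6*x$7 - 16*(x$7)^2))"
  unfolding Sx_def ph_def by (simp add: F4_def power2_eq_square algebra_simps)

lemma dvd65: "(65::int) dvd 2*a + 65*b \<longleftrightarrow> 65 dvd a" by presburger

lemma iso_iff: assumes x: "x \<in> carrier_vec 8"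
  shows "lk_rep V0 x x = 0 \<longleftrightarrow> 65 dvd F4t (phm x)"
proof -
  have "lk_rep V0 x x = 0 \<longleftrightarrow> 65 dvd Sx x" unfolding lk_V0[OF x] frac65 ..
  also have "\<dots> \<longleftrightarrow> 65 dvd F4t (ph x)" unfolding Sx_F by (rule dvd65)
  also have "\<dots> \<longleftrightarrow> 65 dvd F4t (phm x)" unfolding phm_def by (rule modv_F)
  finally show ?thesis .
qed

lemma lf_iso: assumes X: "X \<in> carrier (H1 V0)"
  shows "linking_form V0 X X = 0 \<longleftrightarrow> 65 dvd F4t (Phi X)"
proof -
  obtain x where x: "x \<in> X" using class_ne[OF X] by blast
  have s: "(SOME x. x \<in> X) \<in> X" using x by (rule someI)
  have sc: "(SOME x. x \<in> X) \<in> carrier_vec 8" using class_mem[OF X s] by simp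
  show ?thesis unfolding linking_form_def Phi_def using iso_iff[OF sc] .
qed


lemma ph_add: assumes "x \<in> carrier_vec 8" "y \<in> carrier_vec 8"
  shows "ph (x + y) = addv (ph x) (ph y)"
  unfolding ph_def using assms by (simp add: algebra_simps)

lemma mult_H1: "X \<otimes>\<^bsub>H1 V0\<^esub> Y = {x + y | x y. x \<in> X \<and> y \<in> Y}"
  unfolding H1_def by simp

lemma Phi_mult: assumes X: "X \<in> carrier (H1 V0)" and Y: "Y \<in> carrier (H1 V0)"
  and XY: "X \<otimes>\<^bsub>H1 V0\<^esub> Y \<in> carrier (H1 V0)"
  shows "Phi (X \<otimes>\<^bsub>H1 V0\<^esub> Y) = modv 65 (addv (Phi X) (Phi Y))"
proof -
  obtain x where x: "x \<in> X" using class_ne[OF X] by blast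
  obtain y where y: "y \<in> Y" using class_ne[OF Y] by blast
  have xc: "x \<in> carrier_vec 8" using class_mem[OF X x] by simp
  have yc: "y \<in> carrier_vec 8" using class_mem[OF Y y] by simp
  have "x + y \<in> X \<otimes>\<^bsub>H1 V0\<^esub> Y" unfolding mult_H1 using x y by blast
  then have "Phi (X \<otimes>\<^bsub>H1 V0\<^esub> Y) = phm (x + y)" using Phi_mem[OF XY] by simp
  also have "\<dots> = modv 65 (addv (ph x) (ph y))" unfolding phm_def ph_add[OF xc yc] ..
  also have "\<dots> = modv 65 (addv (Phi X) (Phi Y))"
    unfolding Phi_mem[OF X x] Phi_mem[OF Y y] phm_def modv_add ..
  finally show ?thesis .
qed

lemma no_metabolizer: "\<not> (\<exists>M. metabolizer V0 M)"
proof
  assume "\<exists>M. metabolizer V0 M"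
  then obtain M where M: "metabolizer V0 M" by blast
  have sg: "subgroup M (H1 V0)" and cM: "real (card M) = sqrt (real (knot_det V0))"
    and MM: "M = {g \<in> carrier (H1 V0). \<forall>h \<in> M. linking_form V0 g h = 0}"
    using M unfolding metabolizer_def by auto
  have sq: "sqrt (real (knot_det V0)) = 4225"
  proof -
    have "real (knot_det V0) = 4225^2" unfolding knot_det_V0 by simp
    then show ?thesis by simp
  qed
  have card: "card M = 4225" using cM sq by simp
  have sub: "M \<subseteq> carrier (H1 V0)" using subgroup.subset[OF sg] .
  have iso: "\<And>g. g \<in> M \<Longrightarrow> linking_form V0 g g = 0"
  proof -
    fix g assume g: "g \<in> M"
    then have "g \<in> {g \<in> carrier (H1 V0). \<forall>h \<in> M. linking_form V0 g h = 0}" using MM by simp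
    then show "linking_form V0 g g = 0" using g by simp
  qed
  define T where "T = Phi ` M"
  have T1: "T \<subseteq> box 65" unfolding T_def using Phi_box by auto
  have T2: "\<forall>v\<in>T. 65 dvd F4t v"
    unfolding T_def using iso lf_iso sub by blast
  have T3: "\<forall>v\<in>T. \<forall>w\<in>T. 65 dvd F4t (addv v w)"
  proof (intro ballI)
    fix v w assume "v \<in> T" "w \<in> T"
    then obtain X Y where XY: "X \<in> M" "Y \<in> M" "v = Phi X" "w = Phi Y" unfolding T_def by blast
    have XYM: "X \<otimes>\<^bsub>H1 V0\<^esub> Y \<in> M" using subgroup.m_closed[OF sg XY(1,2)] .
    have Xc: "X \<in> carrier (H1 V0)" "Y \<in> carrier (H1 V0)" "X \<otimes>\<^bsub>H1 V0\<^esub> Y \<in> carrier (H1 V0)"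
      using XY XYM sub by auto
    have "65 dvd F4t (Phi (X \<otimes>\<^bsub>H1 V0\<^esub> Y))" using lf_iso[OF Xc(3)] iso[OF XYM] by simp
    then have "65 dvd F4t (modv 65 (addv v w))" unfolding Phi_mult[OF Xc] XY(3,4) .
    then show "65 dvd F4t (addv v w)" using modv_F by blast
  qed
  have "card T \<le> 65" by (rule card65[OF T1 T2 T3])
  moreover have "card T = card M" unfolding T_def
    by (rule card_image) (rule inj_on_subset[OF Phi_inj sub])
  ultimately show False using card by simp
qed


definition vr :: "int \<times> int \<times> int \<Rightarrow> int vec" where
  "vr i = (case i of (e, p, q) \<Rightarrow>
     vec 8 (\<lambda>k. if k = 0 then e * 33 * (1 - (p^2 + 2*q^2)) else if k = 2 then e * 61 * (1 + (p^2 + 2*q^2))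
         else if k = 4 then p else if k = 6 then q else 0))"

definition Gf :: "int \<times> int \<times> int \<Rightarrow> int vec set" where "Gf i = hrel V0 `` {vr i}"

definition Iset :: "(int \<times> int \<times> int) set" where "Iset = {-1, 1} \<times> {0..<65} \<times> {0..<65}"

lemma vr_carrier: "vr i \<in> carrier_vec 8" unfolding vr_def by (cases i) auto

lemma ph_vr: "ph (vr (e,p,q)) = (e * 33 * (1 - (p^2 + 2*q^2)), e * 61 * (1 + (p^2 + 2*q^2)), p, q)"
  unfolding ph_def vr_def by simp

lemma Phi_Gf: "Phi (Gf i) = phm (vr i)"
  unfolding Gf_def by (rule Phi_mem[OF class_in[OF vr_carrier] class_self[OF vr_carrier]])

lemma Gf_cone: assumes i: "i \<in> Iset" shows "Gf i \<in> isotropic_cone V0"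
proof -
  obtain e p q where eq: "i = (e,p,q)" by (cases i) auto
  have e: "e = -1 \<or> e = 1" using i eq unfolding Iset_def by auto
  then have e2: "e^2 = 1" by auto
  have Gc: "Gf i \<in> carrier (H1 V0)" unfolding Gf_def by (rule class_in[OF vr_carrier])
  define N where "N = p^2 + 2*q^2"
  have "F4t (ph (vr i)) = e^2 * (1089 * (1 - N)^2 + 3721 * (1 + N)^2) + N"
    unfolding eq ph_vr N_def[symmetric] by (simp add: F4_def N_def power2_eq_square algebra_simps)
  also have "\<dots> = 65 * (74 + 81 * N + 74 * N^2)" unfolding e2 by (simp add: power2_eq_square algebra_simps)
  finally have "65 dvd F4t (ph (vr i))" by simp
  then have "65 dvd F4t (Phi (Gf i))" unfolding Phi_Gf phm_def using modv_F by blast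
  then show ?thesis unfolding isotropic_cone_def using Gc lf_iso[OF Gc] by simp
qed

lemma l1: "65 dvd 66 * A \<Longrightarrow> 65 dvd (A::int)"
proof -
  assume "65 dvd 66 * A"
  moreover have "(65::int) dvd 65 * A" by simp
  ultimately have "65 dvd 66 * A - 65 * A" by (rule dvd_diff)
  then show ?thesis by simp
qed
lemma l2: "65 dvd 122 * A \<Longrightarrow> 65 dvd (A::int)"
proof -
  assume "65 dvd 122 * A"
  then have "65 dvd 122 * A * 8" by (rule dvd_mult2)
  moreover have "(65::int) dvd 65 * (15 * A)" by simp
  ultimately have "65 dvd 65 * (15 * A) - 122 * A * 8" by (rule dvd_diff[rotated])
  then show ?thesis by simp
qed
lemma l3: "65 dvd A \<Longrightarrow> 65 dvd B \<Longrightarrow> A + B = 2 \<Longrightarrow> False" for A B :: int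
proof -
  assume "65 dvd A" "65 dvd B" "A + B = 2"
  then have "(65::int) dvd 2" by (metis dvd_add)
  then show False by simp
qed

lemma mod65_range: "0 \<le> (x::int) \<Longrightarrow> x < 65 \<Longrightarrow> x mod 65 = x" by simp

lemma Gf_inj: "inj_on Gf Iset"
proof (rule inj_onI)
  fix i j assume i: "i \<in> Iset" and j: "j \<in> Iset" and e: "Gf i = Gf j"
  obtain e1 p1 q1 where ie: "i = (e1,p1,q1)" by (cases i) auto
  obtain e2 p2 q2 where je: "j = (e2,p2,q2)" by (cases j) auto
  have r: "e1 = -1 \<or> e1 = 1" "0 \<le> p1" "p1 < 65" "0 \<le> q1" "q1 < 65"
          "e2 = -1 \<or> e2 = 1" "0 \<le> p2" "p2 < 65" "0 \<le> q2" "q2 < 65"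
    using i j ie je unfolding Iset_def by auto
  have "phm (vr i) = phm (vr j)" using e Phi_Gf by metis
  then have m: "(e1 * 33 * (1 - (p1^2 + 2*q1^2))) mod 65 = (e2 * 33 * (1 - (p2^2 + 2*q2^2))) mod 65"
     "(e1 * 61 * (1 + (p1^2 + 2*q1^2))) mod 65 = (e2 * 61 * (1 + (p2^2 + 2*q2^2))) mod 65"
     "p1 mod 65 = p2 mod 65" "q1 mod 65 = q2 mod 65"
    unfolding ie je phm_def ph_vr by simp_all
  have pq: "p1 = p2" "q1 = q2" using m(3,4) r mod65_range by metis+
  define N where "N = p1^2 + 2*q1^2"
  have m2: "(e1 * 33 * (1 - N)) mod 65 = (e2 * 33 * (1 - N)) mod 65"
     "(e1 * 61 * (1 + N)) mod 65 = (e2 * 61 * (1 + N)) mod 65"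
    using m(1,2) unfolding N_def pq by simp_all
  have "e1 = e2"
  proof (rule ccontr)
    assume ne: "e1 \<noteq> e2"
    then have "(e1 = 1 \<and> e2 = -1) \<or> (e1 = -1 \<and> e2 = 1)" using r by auto
    then have h: "(33 * (1 - N)) mod 65 = (- 33 * (1 - N)) mod 65 \<and> (61 * (1 + N)) mod 65 = (- 61 * (1 + N)) mod 65"
      using m2 by auto
    have "65 dvd 33 * (1 - N) - (- 33 * (1 - N))" using h by (simp only: mod_eq_dvd_iff)
    then have a1: "65 dvd 66 * (1 - N)" by simp
    have "65 dvd 61 * (1 + N) - (- 61 * (1 + N))" using h by (simp only: mod_eq_dvd_iff)
    then have a2: "65 dvd 122 * (1 + N)" by simp
    show False using l3[OF l1[OF a1] l2[OF a2]] by simp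
  qed
  then show "i = j" unfolding ie je using pq by simp
qed


lemma card_Iset: "card Iset = 8450"
  unfolding Iset_def by (simp add: card_cartesian_product)

lemma cone_big: "real (card (isotropic_cone V0)) > sqrt (real (knot_det V0))"
proof -
  have sq: "sqrt (real (knot_det V0)) = 4225"
  proof -
    have "real (knot_det V0) = 4225^2" unfolding knot_det_V0 by simp
    then show ?thesis by simp
  qed
  have fin: "finite (isotropic_cone V0)"
    using finite_H1 unfolding isotropic_cone_def by simp
  have "card Iset \<le> card (isotropic_cone V0)"
    by (rule card_inj_on_le[OF Gf_inj _ fin]) (use Gf_cone in auto)
  then show ?thesis unfolding sq card_Iset by simp
qed

lemma pow_mod4: "(5::nat)^i mod 4 = 1" "(13::nat)^i mod 4 = 1"
proof -
  have "(5::nat)^i mod 4 = (5 mod 4)^i mod 4" by (rule power_mod[symmetric])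
  then show "(5::nat)^i mod 4 = 1" by simp
  have "(13::nat)^i mod 4 = (13 mod 4)^i mod 4" by (rule power_mod[symmetric])
  then show "(13::nat)^i mod 4 = 1" by simp
qed

lemma divisors: "\<forall>d :: nat. d dvd knot_det V0 \<longrightarrow> d mod 4 \<noteq> 3"
proof (intro allI impI)
  fix d :: nat assume "d dvd knot_det V0"
  then have "d dvd 5^4 * 13^4" unfolding knot_det_V0 by simp
  then obtain b c where bc: "d = b * c" "b dvd 5^4" "c dvd 13^4" using division_decomp by blast
  obtain i where b: "b = 5^i" using bc(2) divides_primepow_nat[of 5 b 4] by auto
  obtain j where c: "c = 13^j" using bc(3) divides_primepow_nat[of 13 c 4] by auto
  have "d mod 4 = ((5^i mod 4) * (13^j mod 4)) mod 4" unfolding bc(1) b c by (simp add: mod_mult_eq)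
  also have "\<dots> = 1" unfolding pow_mod4 by simp
  finally show "d mod 4 \<noteq> 3" by simp
qed

theorem mainTheorem2:
  shows "\<exists>V :: int mat. seifert_matrix V \<and>
     (\<forall>d :: nat. d dvd knot_det V \<longrightarrow> d mod 4 \<noteq> 3) \<and>
     alexander_is_norm V \<and>
     (\<forall>\<xi> :: complex. cmod \<xi> = 1 \<longrightarrow> tl_signature V \<xi> = 0) \<and>
     real (card (isotropic_cone V)) > sqrt (real (knot_det V)) \<and>
     \<not> (\<exists>M. metabolizer V M)"
  using seifert_V0 divisors alex_norm_V0 tl_V0 cone_big no_metabolizer by blast


end
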